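(* Let $q\equiv0\pmod3$, $q\ge9$. The group $G_q$ acts transitively on the points of the axis $\Gamma_{\mathrm{A}}$ of $\Gamma$, i.e. of the line $x_0=x_3=0$.
   Context: $\mathrm{PG}(3,q)$ has points $P(x_0,x_1,x_2,x_3)$. The twisted cubic is $\mathcal{C}=\{P(t^3,t^2,t,1):t\in\mathbb{F}_q\}\cup\{P(1,0,0,0)\}$ and $G_q$ is the group of projectivities of $\mathrm{PG}(3,q)$ mapping $\mathcal{C}$ to itself. For $q\equiv0\pmod3$ the osculating planes $x_0-t^3x_3=0$ ($t\in\mathbb{F}_q$) and $x_3=0$ all contain the line $\Gamma_{\mathrm{A}}$: $x_0=x_3=0$, called the axis of $\Gamma$; it is fixed by $G_q$. *)

theory Defs
  imports "HOL-Analysis.Analysis"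
begin

text \<open>Homogeneous coordinates (x0,x1,x2,x3) of PG(3,q) are vectors in 'a^4,
  indexed 0,1,2,3. A point of PG(3,q) is represented by any nonzero vector;
  two nonzero vectors represent the same point iff they are proportional.\<close>

definition same_point :: "'a::field^4 \<Rightarrow> 'a^4 \<Rightarrow> bool" where
  "same_point v w \<longleftrightarrow> v \<noteq> 0 \<and> w \<noteq> 0 \<and> (\<exists>c. c \<noteq> 0 \<and> w = c *s v)"

definition coords4 :: "'a \<Rightarrow> 'a \<Rightarrow> 'a \<Rightarrow> 'a \<Rightarrow> 'a^4" where
  "coords4 a b c d = (\<chi> i. if i = 0 then a else if i = 1 then b else if i = 2 then c else d)"

definition twisted_cubic_reps :: "('a::field^4) set" where
  "twisted_cubic_reps = {coords4 (t^3) (t^2) t 1 | t. True} \<union> {coords4 1 0 0 0}"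

definition twisted_cubic :: "('a::field^4) set" where
  "twisted_cubic = {w. \<exists>u\<in>twisted_cubic_reps. same_point u w}"

definition G_q :: "('a::field^4^4) set" where
  "G_q = {A. invertible A \<and> (\<lambda>v. A *v v) ` twisted_cubic = twisted_cubic}"

definition axis_pts :: "('a::field^4) set" where
  "axis_pts = {v. v \<noteq> 0 \<and> v $ 0 = 0 \<and> v $ 3 = 0}"

end

theory Submission imports Defs begin

lemma four_cases: "(i::4) = 0 \<or> i = 1 \<or> i = 2 \<or> i = 3"
  using exhaust_4[of i] by auto

lemma c4_nth[simp]: "coords4 a b c d $ 0 = a" "coords4 a b c d $ 1 = b" "coords4 a b c d $ 2 = c" "coords4 a b c d $ 3 = d"
  by (simp_all add: coords4_def)

lemma vec4_eq: "(v::'a^4) = coords4 (v$0) (v$1) (v$2) (v$3)"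
  unfolding vec_eq_iff using four_cases by (metis c4_nth)

lemma sum4: "sum f (UNIV::4 set) = f 0 + f 1 + f 2 + f 3"
proof -
  have "(4::4) = 0" by simp
  then have "f 4 = f 0" by (rule arg_cong)
  then show ?thesis using sum_4[of f] by (simp add: ac_simps)
qed

lemma c4_eq: "coords4 a b c d = coords4 a' b' c' d' \<longleftrightarrow> a=a' \<and> b=b' \<and> c=c' \<and> d=d'"
  by (metis c4_nth)

lemma c4_zero: "(0::'a::zero^4) = coords4 0 0 0 0"
  by (subst vec4_eq) simp

lemma c4_smult: "(k::'a::field) *s coords4 a b c d = coords4 (k*a) (k*b) (k*c) (k*d)"
  by (subst vec4_eq) (simp add: vector_scalar_mult_def)

lemma mat4_mult:
  "coords4 (coords4 a00 a01 a02 a03) (coords4 a10 a11 a12 a13) (coords4 a20 a21 a22 a23) (coords4 a30 a31 a32 a33)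
    *v coords4 x0 x1 x2 x3 =
   coords4 (a00*x0+a01*x1+a02*x2+a03*x3) (a10*x0+a11*x1+a12*x2+a13*x3)
           (a20*x0+a21*x1+a22*x2+a23*x3) (a30*x0+a31*x1+a32*x2+a33*x3)"
  by (subst (2) vec4_eq) (simp add: matrix_vector_mult_def sum4)

lemma free3_dvd:
  assumes "finite S" "\<forall>x\<in>S. f x \<in> S" "\<forall>x\<in>S. f (f (f x)) = x" "\<forall>x\<in>S. f x \<noteq> x"
  shows "3 dvd card S"
  using assms
proof (induct "card S" arbitrary: S rule: less_induct)
  case less
  show ?case
  proof (cases "S = {}")
    case True then show ?thesis by simp
  next
    case False
    then obtain x where x: "x \<in> S" by blast
    define T where "T = S - {x, f x, f (f x)}"
    have fx: "f x \<in> S" "f (f x) \<in> S" using less.prems x by auto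
    have d1: "f x \<noteq> x" using less.prems x by auto
    have d2: "f (f x) \<noteq> f x" using less.prems fx by auto
    have d3: "f (f x) \<noteq> x"
    proof
      assume "f (f x) = x"
      then have "f (f (f x)) = f x" by simp
      then show False using less.prems x d1 by auto
    qed
    have cS: "card S = card T + 3"
    proof -
      have sub: "{x, f x, f (f x)} \<subseteq> S" using x fx by auto
      have "card {x, f x, f (f x)} = 3" using d1 d2 d3 by auto
      moreover have "card T = card S - card {x, f x, f (f x)}"
        unfolding T_def using sub less.prems(1) by (simp add: card_Diff_subset finite_subset)
      moreover have "card {x, f x, f (f x)} \<le> card S" using sub less.prems(1) by (rule card_mono[rotated])
      ultimately show ?thesis by simp
    qed
    have Tinv: "\<forall>y\<in>T. f y \<in> T"
    proof
      fix y assume y: "y \<in> T"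
      then have yS: "y \<in> S" and yn: "y \<noteq> x" "y \<noteq> f x" "y \<noteq> f (f x)" unfolding T_def by auto
      have fyS: "f y \<in> S" using less.prems yS by auto
      have e1: "f (f (f y)) = y" using less.prems yS by auto
      have e2: "f (f (f x)) = x" using less.prems x by auto
      have "f y \<noteq> x"
      proof
        assume "f y = x" then have "f (f (f y)) = f (f x)" by simp
        then show False using e1 yn by simp
      qed
      moreover have "f y \<noteq> f x"
      proof
        assume "f y = f x" then have "f (f (f y)) = f (f (f x))" by simp
        then show False using e1 e2 yn by simp
      qed
      moreover have "f y \<noteq> f (f x)"
      proof
        assume "f y = f (f x)" then have "f (f (f y)) = f (f (f (f x)))" by simp
        then show False using e1 e2 yn by simp
      qed
      ultimately show "f y \<in> T" unfolding T_def using fyS by auto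
    qed
    have "3 dvd card T"
      apply (rule less.hyps)
      using cS less.prems Tinv unfolding T_def by auto
    then show ?thesis using cS by simp
  qed
qed

lemma char3:
  assumes "CARD('a::{finite,field}) mod 3 = 0"
  shows "(3::'a) = 0"
proof (rule ccontr)
  assume n3: "(3::'a) \<noteq> 0"
  define S where "S = (UNIV :: ('a \<times> 'a) set) - {(0,0)}"
  define f where "f = (\<lambda>(a::'a, b::'a). (b, - a - b))"
  have "3 dvd card S"
  proof (rule free3_dvd[of S f])
    show "finite S" unfolding S_def by simp
    show "\<forall>x\<in>S. f x \<in> S" unfolding S_def f_def by auto
    show "\<forall>x\<in>S. f (f (f x)) = x" unfolding S_def f_def by auto
    show "\<forall>x\<in>S. f x \<noteq> x"
    proof
      fix x assume "x \<in> S"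
      then obtain a b where x: "x = (a, b)" and nz: "(a, b) \<noteq> (0, 0)" unfolding S_def by (cases x) auto
      show "f x \<noteq> x"
      proof
        assume "f x = x"
        then have ab: "b = a" "- a - b = b" unfolding x f_def by auto
        then have "3 * a = 0" by (simp add: algebra_simps)
        then have "a = 0" using n3 by simp
        then show False using ab nz by simp
      qed
    qed
  qed
  moreover have "card S = CARD('a) * CARD('a) - 1"
    unfolding S_def by (simp add: card_Diff_subset card_cartesian_product)
  moreover have "CARD('a) \<ge> 1" by (simp add: Suc_leI)
  ultimately have a: "3 dvd CARD('a) * CARD('a) - 1" by simp
  have b: "3 dvd CARD('a) * CARD('a)" using assms by auto
  have "CARD('a) * CARD('a) \<ge> 1" using \<open>CARD('a) \<ge> 1\<close> by simp
  then have "3 dvd (1::nat)" using a b by (metis dvd_diff_nat diff_diff_cancel)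
  then show False by simp
qed

lemma reps_nz: "r \<in> twisted_cubic_reps \<Longrightarrow> r \<noteq> 0"
  unfolding twisted_cubic_reps_def by (auto simp: c4_zero c4_eq)

lemma tcI: "r \<in> twisted_cubic_reps \<Longrightarrow> (k::'a::field) \<noteq> 0 \<Longrightarrow> k *s r \<in> twisted_cubic"
proof -
  assume r: "r \<in> twisted_cubic_reps" and k: "k \<noteq> 0"
  have "same_point r (k *s r)" unfolding same_point_def
    using reps_nz[OF r] k by (intro conjI exI[of _ k]) auto
  then show ?thesis unfolding twisted_cubic_def using r by blast
qed

lemma tc_maps:
  fixes A B :: "'a::field^4^4"
  assumes BA: "B ** A = mat 1" and R: "\<forall>r\<in>twisted_cubic_reps. A *v r \<in> twisted_cubic"
    and u: "u \<in> twisted_cubic"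
  shows "A *v u \<in> twisted_cubic"
proof -
  obtain r c where r: "r \<in> twisted_cubic_reps" and c: "c \<noteq> 0" and uc: "u = c *s r" and u0: "u \<noteq> 0"
    using u unfolding twisted_cubic_def same_point_def by auto
  obtain r' d where r': "r' \<in> twisted_cubic_reps" and d: "d \<noteq> 0" and Ar: "A *v r = d *s r'"
    using R r unfolding twisted_cubic_def same_point_def by blast
  have "A *v u = (c * d) *s r'" using uc Ar by (simp add: vector_scalar_commute)
  then show ?thesis using tcI[OF r'] c d by simp
qed

lemma G_memI:
  fixes A B :: "'a::field^4^4"
  assumes AB: "A ** B = mat 1" and BA: "B ** A = mat 1"
    and RA: "\<forall>r\<in>twisted_cubic_reps. A *v r \<in> twisted_cubic"
    and RB: "\<forall>r\<in>twisted_cubic_reps. B *v r \<in> twisted_cubic"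
  shows "A \<in> G_q"
  unfolding G_q_def
proof (intro CollectI conjI)
  show "invertible A" unfolding invertible_def using AB BA by blast
  show "(\<lambda>v. A *v v) ` twisted_cubic = twisted_cubic"
  proof
    show "(\<lambda>v. A *v v) ` twisted_cubic \<subseteq> twisted_cubic" using tc_maps[OF BA RA] by blast
    show "twisted_cubic \<subseteq> (\<lambda>v. A *v v) ` twisted_cubic"
    proof
      fix u :: "'a^4" assume u: "u \<in> twisted_cubic"
      have "u = A *v (B *v u)" by (simp add: matrix_vector_mul_assoc AB)
      moreover have "B *v u \<in> twisted_cubic" using tc_maps[OF AB RB u] .
      ultimately show "u \<in> (\<lambda>v. A *v v) ` twisted_cubic" by blast
    qed
  qed
qed

lemma G_mult:
  assumes "A \<in> G_q" "B \<in> G_q" shows "A ** B \<in> G_q"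
proof -
  have "(\<lambda>v. (A ** B) *v v) ` twisted_cubic = (\<lambda>v. A *v v) ` ((\<lambda>v. B *v v) ` twisted_cubic)"
    by (auto simp: matrix_vector_mul_assoc[symmetric] image_iff)
  then show ?thesis using assms unfolding G_q_def by (auto intro: invertible_mult)
qed

definition Rm :: "'a::field^4^4" where
  "Rm = coords4 (coords4 0 0 0 1) (coords4 0 0 1 0) (coords4 0 1 0 0) (coords4 1 0 0 0)"

definition Tm :: "'a::field \<Rightarrow> 'a^4^4" where
  "Tm c = coords4 (coords4 1 0 0 (c^3)) (coords4 0 1 (2*c) (c^2)) (coords4 0 0 1 c) (coords4 0 0 0 1)"

lemma Rm_app: "Rm *v coords4 a b c d = coords4 d c b a"
  unfolding Rm_def mat4_mult by simp

lemma Tm_app: "Tm k *v coords4 a b c d = coords4 (a + k^3*d) (b + 2*k*c + k^2*d) (c + k*d) d"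
  unfolding Tm_def mat4_mult by (simp add: algebra_simps)

lemma mat_eq4: "(A::'a::field^4^4) = mat 1 \<longleftrightarrow> (\<forall>a b c d. A *v coords4 a b c d = coords4 a b c d)"
  unfolding matrix_eq by (metis matrix_vector_mul_lid vec4_eq)

lemma Rm_inv: "Rm ** Rm = (mat 1 :: 'a::field^4^4)"
  unfolding mat_eq4 by (simp add: matrix_vector_mul_assoc[symmetric] Rm_app)

lemma Tm_inv: "Tm k ** Tm (-k) = (mat 1 :: 'a::field^4^4)"
  unfolding mat_eq4 by (simp add: matrix_vector_mul_assoc[symmetric] Tm_app c4_eq algebra_simps power2_eq_square power3_eq_cube)

lemma Rm_G: "(Rm :: 'a::field^4^4) \<in> G_q"
proof -
  have "\<forall>r\<in>twisted_cubic_reps. (Rm::'a^4^4) *v r \<in> twisted_cubic"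
  proof
    fix r :: "'a^4" assume "r \<in> twisted_cubic_reps"
    then consider t where "r = coords4 (t^3) (t^2) t 1" | "r = coords4 1 0 0 0"
      unfolding twisted_cubic_reps_def by blast
    then show "Rm *v r \<in> twisted_cubic"
    proof cases
      case (1 t)
      show ?thesis
      proof (cases "t = 0")
        case True
        have "Rm *v r = 1 *s coords4 1 0 0 0" using 1 True by (simp add: Rm_app c4_smult)
        moreover have "coords4 1 0 0 0 \<in> (twisted_cubic_reps :: ('a^4) set)"
          unfolding twisted_cubic_reps_def by blast
        ultimately show ?thesis using tcI[of _ "1::'a"] by simp
      next
        case False
        have ti: "t * inverse t = 1" using False by simp
        have s1: "t^3 * (inverse t)^3 = 1"
        proof -
          have "t^3 * (inverse t)^3 = (t * inverse t)^3" by (simp only: power_mult_distrib)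
          then show ?thesis using ti by simp
        qed
        have s2: "t^3 * (inverse t)^2 = t"
        proof -
          have "t^3 * (inverse t)^2 = t * (t * inverse t)^2" by (simp only: power_mult_distrib power2_eq_square power3_eq_cube mult_ac)
          then show ?thesis using ti by simp
        qed
        have s3: "t^3 * inverse t = t^2"
        proof -
          have "t^3 * inverse t = t * t * (t * inverse t)" by (simp only: power3_eq_cube mult_ac)
          then show ?thesis using ti by (simp add: power2_eq_square)
        qed
        have "Rm *v r = coords4 1 t (t^2) (t^3)" using 1 by (simp add: Rm_app)
        also have "\<dots> = (t^3) *s coords4 ((inverse t)^3) ((inverse t)^2) (inverse t) 1"
          by (simp only: c4_smult s1 s2 s3 mult_1_right)
        finally have "Rm *v r = (t^3) *s coords4 ((inverse t)^3) ((inverse t)^2) (inverse t) 1" .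
        moreover have "coords4 ((inverse t)^3) ((inverse t)^2) (inverse t) 1 \<in> twisted_cubic_reps"
          unfolding twisted_cubic_reps_def by blast
        ultimately show ?thesis using tcI[of _ "t^3"] False by simp
      qed
    next
      case 2
      have "Rm *v r = 1 *s coords4 (0^3) (0^2) 0 1" using 2 by (simp add: Rm_app c4_smult)
      moreover have "coords4 (0^3) (0^2) 0 1 \<in> (twisted_cubic_reps :: ('a^4) set)"
        unfolding twisted_cubic_reps_def by blast
      ultimately show ?thesis using tcI[of _ "1::'a"] by simp
    qed
  qed
  then show ?thesis using G_memI Rm_inv by blast
qed

lemma Tm_reps:
  assumes "(3::'a::field) = 0"
  shows "\<forall>r\<in>twisted_cubic_reps. (Tm k :: 'a^4^4) *v r \<in> twisted_cubic"
proof
  fix r :: "'a^4" assume "r \<in> twisted_cubic_reps"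
  then consider t where "r = coords4 (t^3) (t^2) t 1" | "r = coords4 1 0 0 0"
    unfolding twisted_cubic_reps_def by blast
  then show "Tm k *v r \<in> twisted_cubic"
  proof cases
    case (1 t)
    have cube: "(t + k)^3 = t^3 + k^3 + 3 * (t^2*k + t*k^2)"
      by (simp add: algebra_simps power2_eq_square power3_eq_cube)
    have c3: "(t + k)^3 = t^3 + k^3" using cube assms by simp
    have c2: "(t + k)^2 = t^2 + 2*k*t + k^2" by (simp add: algebra_simps power2_eq_square)
    have "Tm k *v r = coords4 (t^3 + k^3) (t^2 + 2*k*t + k^2) (t+k) 1"
      using 1 by (simp add: Tm_app)
    also have "\<dots> = 1 *s coords4 ((t+k)^3) ((t+k)^2) (t+k) 1"
      by (simp only: c3 c2 vector_smult_lid)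
    finally have "Tm k *v r = 1 *s coords4 ((t+k)^3) ((t+k)^2) (t+k) 1" .
    moreover have "coords4 ((t+k)^3) ((t+k)^2) (t+k) 1 \<in> twisted_cubic_reps"
      unfolding twisted_cubic_reps_def by blast
    ultimately show ?thesis using tcI[of _ "1::'a"] by simp
  next
    case 2
    have "Tm k *v r = 1 *s coords4 1 0 0 0" using 2 by (simp add: Tm_app c4_smult)
    moreover have "coords4 1 0 0 0 \<in> (twisted_cubic_reps :: ('a^4) set)"
      unfolding twisted_cubic_reps_def by blast
    ultimately show ?thesis using tcI[of _ "1::'a"] by simp
  qed
qed

lemma Tm_G:
  assumes "(3::'a::field) = 0"
  shows "(Tm k :: 'a^4^4) \<in> G_q"
  using G_memI[OF Tm_inv Tm_inv[of "-k", simplified] Tm_reps[OF assms] Tm_reps[OF assms]] .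

lemma axis_norm:
  assumes three: "(3::'a::field) = 0" and v: "v \<in> (axis_pts :: ('a^4) set)"
  shows "\<exists>A A' k. A \<in> G_q \<and> A' \<in> G_q \<and> A' ** A = mat 1 \<and> k \<noteq> 0 \<and> A *v v = k *s coords4 0 0 1 0"
proof -
  define a b where "a = v $ 1" and "b = v $ 2"
  have vv: "v = coords4 0 a b 0" using v unfolding axis_pts_def a_def b_def
    by (subst vec4_eq) simp
  have ab: "a \<noteq> 0 \<or> b \<noteq> 0" using v vv unfolding axis_pts_def by (auto simp: c4_zero)
  have two: "(2::'a) \<noteq> 0"
  proof
    assume "(2::'a) = 0"
    then have "(3::'a) - 2 = 0" using three by simp
    then show False by simp
  qed
  show ?thesis
  proof (cases "b = 0")
    case True
    then have "a \<noteq> 0" using ab by simp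
    moreover have "Rm *v v = a *s coords4 0 0 1 0" using True vv by (simp add: Rm_app c4_smult)
    ultimately show ?thesis using Rm_G Rm_inv by blast
  next
    case False
    define c where "c = - a / (2 * b)"
    have "a + 2 * c * b = 0" unfolding c_def using False two by (simp add: field_simps)
    then have "Tm c *v v = b *s coords4 0 0 1 0" using vv by (simp add: Tm_app c4_smult)
    moreover have "Tm (-c) ** Tm c = (mat 1 :: 'a^4^4)" using Tm_inv[of "-c"] by simp
    ultimately show ?thesis using Tm_G[OF three] False by blast
  qed
qed

theorem proposition7p1:
  assumes "CARD('a::{finite,field}) mod 3 = 0" and "CARD('a) \<ge> 9"
  shows "\<forall>v\<in>(axis_pts :: ('a^4) set). \<forall>w\<in>axis_pts.
           \<exists>A\<in>(G_q :: ('a^4^4) set). same_point (A *v v) w"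
proof (intro ballI)
  fix v w :: "'a^4"
  assume v: "v \<in> axis_pts" and w: "w \<in> axis_pts"
  have three: "(3::'a) = 0" using char3 assms(1) by blast
  obtain Av Av' kv where Av: "Av \<in> G_q" and kv: "kv \<noteq> 0" and Avv: "Av *v v = kv *s coords4 0 0 1 0"
    using axis_norm[OF three v] by blast
  obtain Aw Aw' kw where Aw': "Aw' \<in> G_q" and inv: "Aw' ** Aw = mat 1" and kw: "kw \<noteq> 0"
     and Aww: "Aw *v w = kw *s coords4 0 0 1 0"
    using axis_norm[OF three w] by blast
  have w0: "w \<noteq> 0" using w unfolding axis_pts_def by simp
  have "Aw' *v (Aw *v w) = w" by (simp add: matrix_vector_mul_assoc inv)
  then have we: "kw *s (Aw' *v coords4 0 0 1 0) = w" using Aww by (simp add: vector_scalar_commute)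
  have "(Aw' ** Av) *v v = kv *s (Aw' *v coords4 0 0 1 0)"
    by (simp add: matrix_vector_mul_assoc[symmetric] Avv vector_scalar_commute)
  also have "\<dots> = (kv / kw) *s w"
  proof -
    let ?X = "Aw' *v coords4 0 0 1 0"
    have "?X = ((1 / kw) * kw) *s ?X" using kw by simp
    also have "\<dots> = (1 / kw) *s (kw *s ?X)" by (rule vector_smult_assoc[symmetric])
    also have "\<dots> = (1 / kw) *s w" by (simp only: we)
    finally have X: "?X = (1 / kw) *s w" .
    have "kv *s ?X = kv *s ((1 / kw) *s w)" by (simp only: X)
    also have "\<dots> = (kv * (1 / kw)) *s w" by (rule vector_smult_assoc)
    also have "\<dots> = (kv / kw) *s w" by simp
    finally show ?thesis .
  qed
  finally have Bv: "(Aw' ** Av) *v v = (kv / kw) *s w" .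
  have c0: "kv / kw \<noteq> 0" "kw / kv \<noteq> 0" using kv kw by simp_all
  have ww: "w = (kw / kv) *s ((kv / kw) *s w)"
  proof -
    have "(kw / kv) *s ((kv / kw) *s w) = ((kw / kv) * (kv / kw)) *s w" by (rule vector_smult_assoc)
    also have "(kw / kv) * (kv / kw) = 1" using kv kw by simp
    finally show ?thesis by simp
  qed
  have "same_point ((Aw' ** Av) *v v) w"
    unfolding same_point_def Bv
  proof (intro conjI exI)
    show "(kv / kw) *s w \<noteq> 0" using c0 w0 by simp
    show "w \<noteq> 0" by (rule w0)
    show "kw / kv \<noteq> 0" by (rule c0(2))
    show "w = (kw / kv) *s ((kv / kw) *s w)" by (rule ww)
  qed
  moreover have "Aw' ** Av \<in> G_q" using G_mult Aw' Av by blast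
  ultimately show "\<exists>A\<in>G_q. same_point (A *v v) w" by blast
qed

end
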